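(* Let $p$ be a prime and $\alpha\in\mathbb{Q}_p$ an algebraic number. Then the continued fractions $[b_0,b_1,\dots]$ produced from $\alpha$ by Algorithm A and by Algorithm B (defined in the context) always converge to a $p$-adic number.
   Context: Let $\mathcal{R}=\{-\frac{p-1}{2},\dots,0,\dots,\frac{p-1}{2}\}$ if $p$ is odd, and $\mathcal{R}=\{0,1\}$ if $p=2$. Every nonzero $\alpha\in\mathbb{Q}_p$ is written uniquely as $\alpha=\sum_{n\ge r}a_np^n$ with $r=v_p(\alpha)$, $a_n\in\mathcal{R}$, $a_r\ne0$. Put $s(\alpha)=\sum_{n=r}^{0}a_np^n$, $t(\alpha)=\sum_{n=r}^{-1}a_np^n$ (empty sums are $0$). For an algebraic $\alpha\in\mathbb{Q}_p$ whose minimal polynomial over $\mathbb{Q}$ has degree $d$, with trace $\operatorname{Tr}(\alpha)$, and $\operatorname{round}(x)$ the integer nearest to the real $x$, define $\bar s(\alpha)=\operatorname{round}\!\left(\frac{\operatorname{Tr}(\alpha)/d-s(\alpha)}{p}\right)p+s(\alpha)$ and $\bar t(\alpha)=\operatorname{round}\!\left(\operatorname{Tr}(\alpha)/d-t(\alpha)\right)+t(\alpha)$. An expansion algorithm starts with $\alpha_0=\alpha$; at step $n$ it chooses $b_n$ by a rule; if $\alpha_n=b_n$ it stops, otherwise it sets $\alpha_{n+1}=\frac1{\alpha_n-b_n}$. The continued fraction $[b_0,b_1,\dots]=b_0+\cfrac{1}{b_1+\cfrac{1}{b_2+\cdots}}$ converges if its convergents $[b_0,\dots,b_n]$ converge in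 $\mathbb{Q}_p$. Algorithm A: $b_0=\bar s(\alpha_0)$; for $n\ge1$, $b_n=\bar s(\alpha_n)$ if $v_p(\alpha_n)=0$ and $b_n=\bar t(\alpha_n)$ if $v_p(\alpha_n)<0$. Algorithm B: $b_n=\bar s(\alpha_n)$ if $n$ is even and $b_n=\bar t(\alpha_n)$ if $n$ is odd. *)

theory Defs
  imports "HOL-Computational_Algebra.Computational_Algebra"
begin

text \<open>The field Q_p is characterised axiomatically (up to unique isometric isomorphism):
  a field of characteristic 0 (containing Q via of_rat) with a non-archimedean absolute value
  extending the p-adic absolute value of Q, complete, and in which Q is dense.\<close>

definition padic_field :: "nat \<Rightarrow> ('a::field_char_0 \<Rightarrow> real) \<Rightarrow> bool" where
  "padic_field p absv \<longleftrightarrow>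
     (\<forall>x. 0 \<le> absv x) \<and>
     (\<forall>x. absv x = 0 \<longleftrightarrow> x = 0) \<and>
     (\<forall>x y. absv (x * y) = absv x * absv y) \<and>
     (\<forall>x y. absv (x + y) \<le> max (absv x) (absv y)) \<and>
     absv (of_nat p) = 1 / real p \<and>
     (\<forall>m::int. coprime m (int p) \<longrightarrow> absv (of_int m) = 1) \<and>
     (\<forall>X::nat \<Rightarrow> 'a. (\<forall>e>0. \<exists>N. \<forall>m\<ge>N. \<forall>n\<ge>N. absv (X m - X n) < e)
         \<longrightarrow> (\<exists>L. \<forall>e>0. \<exists>N. \<forall>n\<ge>N. absv (X n - L) < e)) \<and>
     (\<forall>x. \<forall>e>0. \<exists>q::rat. absv (x - of_rat q) < e)"

definition padic_tendsto :: "('a::field_char_0 \<Rightarrow> real) \<Rightarrow> (nat \<Rightarrow> 'a) \<Rightarrow> 'a \<Rightarrow> bool" where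
  "padic_tendsto absv X L \<longleftrightarrow> (\<forall>e>0. \<exists>N. \<forall>n\<ge>N. absv (X n - L) < e)"

definition padic_val :: "nat \<Rightarrow> ('a::field_char_0 \<Rightarrow> real) \<Rightarrow> 'a \<Rightarrow> int" where
  "padic_val p absv x = (THE r::int. absv x = real p powr (- of_int r))"

definition digit_set :: "nat \<Rightarrow> int set" where
  "digit_set p = (if p = 2 then {0, 1} else {- ((int p - 1) div 2) .. (int p - 1) div 2})"

definition padic_digits :: "nat \<Rightarrow> ('a::field_char_0 \<Rightarrow> real) \<Rightarrow> 'a \<Rightarrow> int \<Rightarrow> int" where
  "padic_digits p absv x = (THE a::int \<Rightarrow> int.
      (\<forall>n. a n \<in> digit_set p) \<and>
      (\<forall>n < padic_val p absv x. a n = 0) \<and>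
      a (padic_val p absv x) \<noteq> 0 \<and>
      padic_tendsto absv
        (\<lambda>N. of_rat (\<Sum>n\<in>{padic_val p absv x .. padic_val p absv x + int N}.
                         of_int (a n) * (of_nat p :: rat) powi n)) x)"

definition padic_s :: "nat \<Rightarrow> ('a::field_char_0 \<Rightarrow> real) \<Rightarrow> 'a \<Rightarrow> rat" where
  "padic_s p absv x = (if x = 0 then 0 else
     (\<Sum>n\<in>{padic_val p absv x .. 0}. of_int (padic_digits p absv x n) * (of_nat p :: rat) powi n))"

definition padic_t :: "nat \<Rightarrow> ('a::field_char_0 \<Rightarrow> real) \<Rightarrow> 'a \<Rightarrow> rat" where
  "padic_t p absv x = (if x = 0 then 0 else
     (\<Sum>n\<in>{padic_val p absv x .. -1}. of_int (padic_digits p absv x n) * (of_nat p :: rat) powi n))"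

definition algebraic_over_Q :: "'a::field_char_0 \<Rightarrow> bool" where
  "algebraic_over_Q x \<longleftrightarrow> (\<exists>P::rat poly. P \<noteq> 0 \<and> poly (map_poly of_rat P) x = 0)"

definition min_poly_Q :: "'a::field_char_0 \<Rightarrow> rat poly" where
  "min_poly_Q x = (THE P::rat poly. lead_coeff P = 1 \<and> irreducible P \<and> poly (map_poly of_rat P) x = 0)"

text \<open>Trace of x: sum of conjugates = minus the subleading coefficient of the minimal polynomial.\<close>
definition trace_Q :: "'a::field_char_0 \<Rightarrow> rat" where
  "trace_Q x = - coeff (min_poly_Q x) (degree (min_poly_Q x) - 1)"

definition deg_Q :: "'a::field_char_0 \<Rightarrow> nat" where
  "deg_Q x = degree (min_poly_Q x)"

definition sbar :: "nat \<Rightarrow> ('a::field_char_0 \<Rightarrow> real) \<Rightarrow> 'a \<Rightarrow> rat" where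
  "sbar p absv x = of_int (round ((trace_Q x / of_nat (deg_Q x) - padic_s p absv x) / of_nat p)) * of_nat p
                   + padic_s p absv x"

definition tbar :: "nat \<Rightarrow> ('a::field_char_0 \<Rightarrow> real) \<Rightarrow> 'a \<Rightarrow> rat" where
  "tbar p absv x = of_int (round (trace_Q x / of_nat (deg_Q x) - padic_t p absv x)) + padic_t p absv x"

fun cf_alpha :: "(nat \<Rightarrow> 'a::field_char_0 \<Rightarrow> rat) \<Rightarrow> 'a \<Rightarrow> nat \<Rightarrow> 'a" where
  "cf_alpha rule a 0 = a"
| "cf_alpha rule a (Suc n) = inverse (cf_alpha rule a n - of_rat (rule n (cf_alpha rule a n)))"

definition cf_b :: "(nat \<Rightarrow> 'a::field_char_0 \<Rightarrow> rat) \<Rightarrow> 'a \<Rightarrow> nat \<Rightarrow> rat" where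
  "cf_b rule a n = rule n (cf_alpha rule a n)"

definition cf_stops :: "(nat \<Rightarrow> 'a::field_char_0 \<Rightarrow> rat) \<Rightarrow> 'a \<Rightarrow> bool" where
  "cf_stops rule a \<longleftrightarrow> (\<exists>n. cf_alpha rule a n = of_rat (cf_b rule a n))"

fun cf_eval :: "rat list \<Rightarrow> rat" where
  "cf_eval [] = 0"
| "cf_eval [b] = b"
| "cf_eval (b # bs) = b + 1 / cf_eval bs"

definition cf_convergent :: "(nat \<Rightarrow> rat) \<Rightarrow> nat \<Rightarrow> rat" where
  "cf_convergent b n = cf_eval (map b [0..<Suc n])"

definition ruleA :: "nat \<Rightarrow> ('a::field_char_0 \<Rightarrow> real) \<Rightarrow> nat \<Rightarrow> 'a \<Rightarrow> rat" where
  "ruleA p absv n x = (if n = 0 then sbar p absv x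
                       else if padic_val p absv x = 0 then sbar p absv x
                       else if padic_val p absv x < 0 then tbar p absv x
                       else undefined)"

definition ruleB :: "nat \<Rightarrow> ('a::field_char_0 \<Rightarrow> real) \<Rightarrow> nat \<Rightarrow> 'a \<Rightarrow> rat" where
  "ruleB p absv n x = (if even n then sbar p absv x else tbar p absv x)"

end

theory Submission
  imports Defs
begin


locale pf =
  fixes p :: nat and absv :: "'a::field_char_0 \<Rightarrow> real"
  assumes prime: "prime p" and pfld: "padic_field p absv"
begin

abbreviation "P \<equiv> real p"

lemma P_gt1: "P > 1"
  using prime prime_gt_1_nat by auto

lemma P_pos: "P > 0" using P_gt1 by simp

lemma av_nonneg: "0 \<le> absv x" using pfld unfolding padic_field_def by blast
lemma av_zero_iff: "absv x = 0 \<longleftrightarrow> x = 0" using pfld unfolding padic_field_def by blast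
lemma av_mult: "absv (x * y) = absv x * absv y" using pfld unfolding padic_field_def by blast
lemma av_ultra: "absv (x + y) \<le> max (absv x) (absv y)" using pfld unfolding padic_field_def by blast
lemma av_p: "absv (of_nat p) = 1 / P" using pfld unfolding padic_field_def by blast
lemma av_coprime: "coprime m (int p) \<Longrightarrow> absv (of_int m) = 1" using pfld unfolding padic_field_def by blast
lemma av_complete:
  fixes X :: "nat \<Rightarrow> 'a"
  assumes "\<forall>e>0. \<exists>N. \<forall>m\<ge>N. \<forall>n\<ge>N. absv (X m - X n) < e"
  shows "\<exists>L. \<forall>e>0. \<exists>N. \<forall>n\<ge>N. absv (X n - L) < e"
proof -
  have H: "\<forall>X::nat \<Rightarrow> 'a. (\<forall>e>0. \<exists>N. \<forall>m\<ge>N. \<forall>n\<ge>N. absv (X m - X n) < e)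
         \<longrightarrow> (\<exists>L. \<forall>e>0. \<exists>N. \<forall>n\<ge>N. absv (X n - L) < e)"
    using pfld unfolding padic_field_def by (elim conjE) assumption
  show ?thesis using H assms by blast
qed
lemma av_dense: "e > 0 \<Longrightarrow> \<exists>q::rat. absv (x - of_rat q) < e" using pfld unfolding padic_field_def by blast

lemma av_pos: "x \<noteq> 0 \<Longrightarrow> absv x > 0"
  using av_nonneg av_zero_iff by (metis less_eq_real_def)

lemma av_0[simp]: "absv 0 = 0" using av_zero_iff by blast

lemma av_1[simp]: "absv 1 = 1"
proof -
  have "absv 1 = absv 1 * absv 1" using av_mult[of 1 1] by simp
  moreover have "absv 1 \<noteq> 0" using av_zero_iff by simp
  ultimately show ?thesis by simp
qed

lemma av_m1: "absv (-1) = 1"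
proof -
  have "absv (-1) * absv (-1) = 1" using av_mult[of "-1" "-1"] by simp
  then show ?thesis using av_nonneg[of "-1"]
    by (metis abs_of_nonneg mult_cancel_right1 mult_le_cancel_left1 nle_le not_one_le_zero real_sqrt_abs2 real_sqrt_one)
qed

lemma av_minus[simp]: "absv (- x) = absv x"
  using av_mult[of "-1" x] av_m1 by simp

lemma av_commute: "absv (x - y) = absv (y - x)"
  by (metis av_minus minus_diff_eq)

lemma av_inverse: "absv (inverse x) = inverse (absv x)"
proof (cases "x = 0")
  case False
  then have "absv (inverse x) * absv x = 1" using av_mult[of "inverse x" x] by simp
  then show ?thesis by (metis inverse_unique mult.commute)
qed simp

lemma av_divide: "absv (x / y) = absv x / absv y"
  by (simp add: divide_inverse av_mult av_inverse)

lemma av_power: "absv (x ^ n) = absv x ^ n"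
  by (induction n) (simp_all add: av_mult)

lemma av_power_int: "absv (x powi n) = absv x powi n"
proof (cases "n \<ge> 0")
  case True then show ?thesis by (simp add: power_int_nonneg_exp av_power)
next
  case False
  then have "n = - int (nat (-n))" by simp
  then show ?thesis
    by (metis av_inverse av_power power_int_minus power_int_of_nat)
qed

lemma av_diff: "absv (x - y) \<le> max (absv x) (absv y)"
  using av_ultra[of x "-y"] by simp

lemma av_add_eq: assumes "absv y < absv x" shows "absv (x + y) = absv x"
proof -
  have "absv (x + y) \<le> absv x" using av_ultra[of x y] assms by simp
  moreover have "absv x \<le> max (absv (x + y)) (absv y)" using av_diff[of "x+y" y] by simp
  ultimately show ?thesis using assms by linarith
qed

lemma av_le_trans: "absv (x - y) \<le> c \<Longrightarrow> absv (y - z) \<le> c \<Longrightarrow> absv (x - z) \<le> c"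
  using av_ultra[of "x - y" "y - z"] by simp

lemma av_sum_le:
  assumes "finite A" "c \<ge> 0" "\<And>i. i \<in> A \<Longrightarrow> absv (f i) \<le> c"
  shows "absv (sum f A) \<le> c"
  using assms
proof (induction A rule: finite_induct)
  case (insert x F)
  then have "absv (f x) \<le> c" "absv (sum f F) \<le> c" by auto
  then show ?case using av_ultra[of "f x" "sum f F"] insert.hyps by simp
qed simp

lemma av_nat_le1: "absv (of_nat n) \<le> 1"
proof (induction n)
  case (Suc n) then show ?case using av_ultra[of 1 "of_nat n"] by (simp add: add.commute)
qed simp

lemma av_int_le1: "absv (of_int m) \<le> 1"
  by (metis av_minus av_nat_le1 of_int_minus of_int_of_nat_eq int_cases2)

lemma av_int_dvd: "int p dvd m \<Longrightarrow> absv (of_int m) \<le> 1 / P"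
proof -
  assume "int p dvd m"
  then obtain k where "m = int p * k" by blast
  then have "absv (of_int m) = (1/P) * absv (of_int k)" by (simp add: av_mult av_p)
  then show ?thesis using av_int_le1[of k] P_pos
    by (simp add: divide_right_mono)
qed

lemma av_int_ndvd: "\<not> int p dvd m \<Longrightarrow> absv (of_int m) = 1"
proof -
  assume "\<not> int p dvd m"
  have "prime (int p)" using prime by simp
  then have "coprime (int p) m" using \<open>\<not> int p dvd m\<close> prime_imp_coprime by blast
  then show ?thesis using av_coprime by (simp add: coprime_commute)
qed

lemma av_rat_div: "absv (of_rat (of_int a / of_int b) :: 'a) = absv (of_int a :: 'a) / absv (of_int b :: 'a)"
  by (simp add: of_rat_divide av_divide)

end

context pf begin

lemma Ppow_less_iff: "P powi k < P powi j \<longleftrightarrow> k < j"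
  using power_int_strict_increasing[OF _ P_gt1] power_int_increasing[of _ _ P] P_gt1
  by (metis linorder_not_le less_eq_real_def not_less)

lemma Ppow_le_iff: "P powi k \<le> P powi j \<longleftrightarrow> k \<le> j"
  using Ppow_less_iff by (meson linorder_not_le)

lemma Ppow_pos: "P powi k > 0" using P_pos by simp

lemma av_int_pow: "m \<noteq> 0 \<Longrightarrow> \<exists>k::int. absv (of_int m :: 'a) = P powi k"
proof (induction "nat \<bar>m\<bar>" arbitrary: m rule: less_induct)
  case less
  show ?case
  proof (cases "int p dvd m")
    case True
    then obtain m' where m': "m = int p * m'" by blast
    have "m' \<noteq> 0" using less.prems m' by auto
    have "p \<ge> 2" using prime prime_ge_2_nat by blast
    have "\<bar>m\<bar> = int p * \<bar>m'\<bar>" using m' by (simp add: abs_mult)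
    moreover have "\<bar>m'\<bar> > 0" using \<open>m' \<noteq> 0\<close> by simp
    ultimately have "\<bar>m'\<bar> < \<bar>m\<bar>" using \<open>p \<ge> 2\<close> mult_strict_right_mono[of 1 "int p" "\<bar>m'\<bar>"] by simp
    then have "nat \<bar>m'\<bar> < nat \<bar>m\<bar>" by simp
    then obtain k where k: "absv (of_int m' :: 'a) = P powi k" using less.hyps \<open>m' \<noteq> 0\<close> by blast
    have "absv (of_int m :: 'a) = (1/P) * P powi k" using m' k by (simp add: av_mult av_p)
    also have "\<dots> = P powi (k - 1)" using P_pos by (simp add: power_int_diff field_simps)
    finally show ?thesis by blast
  next
    case False
    then have "absv (of_int m :: 'a) = P powi 0" using av_int_ndvd by simp
    then show ?thesis by blast
  qed
qed

lemma av_rat_pow: "q \<noteq> 0 \<Longrightarrow> \<exists>k::int. absv (of_rat q :: 'a) = P powi k"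
proof -
  assume "q \<noteq> 0"
  obtain a b where qa: "quotient_of q = (a, b)" by (cases "quotient_of q")
  have q: "q = of_int a / of_int b" using quotient_of_div[OF qa] .
  have "b > 0" using quotient_of_denom_pos[OF qa] .
  have "a \<noteq> 0" using q \<open>q \<noteq> 0\<close> by auto
  obtain i where i: "absv (of_int a :: 'a) = P powi i" using av_int_pow \<open>a \<noteq> 0\<close> by blast
  obtain j where j: "absv (of_int b :: 'a) = P powi j" using av_int_pow \<open>b > 0\<close> by (metis less_irrefl)
  have "absv (of_rat q :: 'a) = P powi i / P powi j" using q i j av_rat_div by simp
  also have "\<dots> = P powi (i - j)" using P_pos by (simp add: power_int_diff)
  finally show ?thesis by blast
qed

lemma av_val: "x \<noteq> 0 \<Longrightarrow> \<exists>k::int. absv x = P powi k"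
proof -
  assume "x \<noteq> 0"
  then obtain q where q: "absv (x - of_rat q) < absv x" using av_dense av_pos by blast
  have "absv (of_rat q + (x - of_rat q)) = absv (of_rat q)"
  proof (rule ccontr)
    assume "absv (of_rat q + (x - of_rat q)) \<noteq> absv (of_rat q)"
    then have "\<not> absv (x - of_rat q) < absv (of_rat q)" using av_add_eq by blast
    then have "absv (of_rat q) < absv x" using q by linarith
    moreover have "absv x \<le> max (absv (of_rat q)) (absv (x - of_rat q))"
      using av_ultra[of "of_rat q" "x - of_rat q"] by simp
    ultimately show False using q by linarith
  qed
  then have e: "absv x = absv (of_rat q :: 'a)" by simp
  then have "q \<noteq> 0" using q by auto
  then show ?thesis using av_rat_pow e by auto
qed

lemma disc_lt1: "absv x < 1 \<Longrightarrow> absv x \<le> 1 / P"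
proof (cases "x = 0")
  case False
  assume "absv x < 1"
  obtain k where k: "absv x = P powi k" using av_val False by blast
  then have "P powi k < P powi 0" using \<open>absv x < 1\<close> by simp
  then have "k < 0" using Ppow_less_iff by blast
  then have "k \<le> -1" by simp
  then have "P powi k \<le> P powi (-1)" using Ppow_le_iff by blast
  then show ?thesis using k by (simp add: power_int_minus inverse_eq_divide)
qed (simp add: P_pos)

lemma disc_gt1: "absv x > 1 \<Longrightarrow> absv x \<ge> P"
proof -
  assume "absv x > 1"
  then have "x \<noteq> 0" by auto
  obtain k where k: "absv x = P powi k" using av_val \<open>x \<noteq> 0\<close> by blast
  then have "P powi 0 < P powi k" using \<open>absv x > 1\<close> by simp
  then have "0 < k" using Ppow_less_iff by blast
  then have "1 \<le> k" by simp
  then have "P powi 1 \<le> P powi k" using Ppow_le_iff by blast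
  then show ?thesis using k by simp
qed

lemma val_eq: "x \<noteq> 0 \<Longrightarrow> absv x = P powi (- padic_val p absv x)"
proof -
  assume "x \<noteq> 0"
  obtain k where k: "absv x = P powi k" using av_val \<open>x \<noteq> 0\<close> by blast
  have pr: "\<And>r::int. P powr (- of_int r) = P powi (- r)"
  proof -
    fix r :: int
    have "P powr (- of_int r) = P powr (real_of_int (-r))" by simp
    also have "\<dots> = P powi (-r)" by (rule powr_real_of_int') (use P_pos in auto)
    finally show "P powr (- of_int r) = P powi (- r)" .
  qed
  have "\<exists>!r::int. absv x = P powr (- of_int r)"
  proof
    show "absv x = P powr (- of_int (-k))" using k pr[of "-k"] by simp
    fix r assume "absv x = P powr (- of_int r)"
    then have "P powi (-r) = P powi k" using k pr by simp
    then have "P powi (-r) \<le> P powi k" "P powi k \<le> P powi (-r)" by simp_all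
    then have "-r \<le> k" "k \<le> -r" using Ppow_le_iff by blast+
    then show "r = -k" by simp
  qed
  then have "absv x = P powr (- of_int (padic_val p absv x))"
    unfolding padic_val_def by (rule theI')
  then show ?thesis using pr by simp
qed

end

context pf begin

lemma digit_exists: "\<exists>c \<in> digit_set p. int p dvd (z - c)"
proof (cases "p = 2")
  case True
  then show ?thesis unfolding digit_set_def
  proof (intro bexI[of _ "z mod 2"])
    have "z - z mod 2 = 2 * (z div 2)" by (simp add: minus_mod_eq_mult_div)
    then show "int p dvd z - z mod 2" using True by simp
    have "z mod 2 = 0 \<or> z mod 2 = 1" by auto
    then show "z mod 2 \<in> (if p = 2 then {0, 1} else {- ((int p - 1) div 2)..(int p - 1) div 2})" using True by auto
  qed
next
  case False
  have "p \<ge> 2" using prime prime_ge_2_nat by blast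
  have "p > 2" using \<open>p \<ge> 2\<close> False by simp
  then have "odd p" using prime prime_odd_nat by blast
  define h where "h = (int p - 1) div 2"
  obtain k where "p = 2 * k + 1" using \<open>odd p\<close> by (rule oddE)
  then have ph: "int p = 2 * h + 1" unfolding h_def by simp
  define c where "c = (z + h) mod int p - h"
  have "0 \<le> (z + h) mod int p" "(z + h) mod int p < int p" using \<open>p \<ge> 2\<close> by simp_all
  then have "c \<in> {-h..h}" unfolding c_def using ph by auto
  moreover have "int p dvd (z - c)" unfolding c_def
  proof -
    have "z - ((z + h) mod int p - h) = (z + h) - (z + h) mod int p" by simp
    also have "\<dots> = int p * ((z + h) div int p)" by (simp add: minus_mod_eq_mult_div)
    finally show "int p dvd z - ((z + h) mod int p - h)" by simp
  qed
  ultimately show ?thesis unfolding digit_set_def h_def using False by auto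
qed

lemma digit_diff: assumes "c \<in> digit_set p" "c' \<in> digit_set p" "c \<noteq> c'"
  shows "\<not> int p dvd (c - c')"
proof
  assume d: "int p dvd (c - c')"
  have "p \<ge> 2" using prime prime_ge_2_nat by blast
  have "\<bar>c - c'\<bar> < int p"
  proof (cases "p = 2")
    case True then show ?thesis using assms unfolding digit_set_def by auto
  next
    case False
    have "c \<in> {- ((int p - 1) div 2) .. (int p - 1) div 2}" "c' \<in> {- ((int p - 1) div 2) .. (int p - 1) div 2}"
      using assms False unfolding digit_set_def by auto
    then show ?thesis by auto
  qed
  moreover have "c - c' \<noteq> 0" using assms by simp
  ultimately have "\<bar>int p\<bar> \<le> \<bar>c - c'\<bar>" using d dvd_imp_le_int by blast
  then show False using \<open>\<bar>c - c'\<bar> < int p\<close> by linarith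
qed

lemma approx_digit:
  assumes "absv y \<le> 1"
  shows "\<exists>c \<in> digit_set p. absv (y - of_int c) \<le> 1 / P"
proof -
  obtain q where q: "absv (y - of_rat q) < 1" using av_dense[of 1 y] by auto
  have qle: "absv (of_rat q :: 'a) \<le> 1"
    using av_diff[of y "y - of_rat q"] assms q by simp
  obtain a b where qa: "quotient_of q = (a, b)" by (cases "quotient_of q")
  have qd: "q = of_int a / of_int b" using quotient_of_div[OF qa] .
  have "b > 0" using quotient_of_denom_pos[OF qa] .
  have cop: "coprime a b" using quotient_of_coprime[OF qa] .
  have nb: "\<not> int p dvd b"
  proof
    assume "int p dvd b"
    have "\<not> int p dvd a"
    proof
      assume "int p dvd a"
      then have "is_unit (int p)" using cop \<open>int p dvd b\<close> coprime_common_divisor by blast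
      then show False using prime by (simp add: prime_ge_2_nat)
    qed
    then have "absv (of_int a :: 'a) = 1" using av_int_ndvd by blast
    moreover have "absv (of_int b :: 'a) \<le> 1 / P" using \<open>int p dvd b\<close> av_int_dvd by blast
    moreover have "absv (of_int b :: 'a) > 0" using av_pos \<open>b > 0\<close> by simp
    ultimately have e: "absv (of_rat q :: 'a) = 1 / absv (of_int b :: 'a)" using qd av_rat_div[of a b] by simp
    have "1 / (1 / P) \<le> 1 / absv (of_int b :: 'a)"
      using \<open>absv (of_int b :: 'a) \<le> 1 / P\<close> \<open>absv (of_int b :: 'a) > 0\<close> P_pos by (intro divide_left_mono) (auto intro: divide_pos_pos)
    then have "absv (of_rat q :: 'a) \<ge> P" using e by simp
    then show False using qle P_gt1 by simp
  qed
  have avb: "absv (of_int b :: 'a) = 1" using av_int_ndvd nb by blast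
  have "prime (int p)" using prime by simp
  then have "coprime (int p) b" using nb prime_imp_coprime by blast
  then have "coprime b (int p)" by (simp add: coprime_commute)
  then obtain u v where uv: "u * b + v * int p = 1" using bezout_int[of b "int p"] by auto
  obtain c where c: "c \<in> digit_set p" "int p dvd (a * u - c)" using digit_exists by blast
  have "a - c * b = a * v * int p + (a * u - c) * b"
  proof -
    have "a = a * (u * b + v * int p)" using uv by simp
    then show ?thesis by (simp add: algebra_simps)
  qed
  then have "int p dvd (a - c * b)" using c(2) by simp
  then have "absv (of_int (a - c * b) :: 'a) \<le> 1 / P" by (rule av_int_dvd)
  moreover have "of_rat q - of_int c = (of_int (a - c * b) :: 'a) / of_int b"
  proof -
    have bn: "(of_int b :: 'a) \<noteq> 0" using \<open>b > 0\<close> by simp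
    have "(of_rat q :: 'a) = of_int a / of_int b" using qd by (simp add: of_rat_divide)
    then show ?thesis using bn by (simp add: diff_divide_distrib)
  qed
  ultimately have "absv (of_rat q - of_int c :: 'a) \<le> 1 / P" using avb by (simp add: av_divide)
  moreover have "absv (y - of_rat q) \<le> 1 / P" using disc_lt1 q by blast
  ultimately have "absv ((y - of_rat q) + (of_rat q - of_int c)) \<le> 1 / P"
    using av_ultra[of "y - of_rat q" "of_rat q - of_int c"] by simp
  then show ?thesis using c(1) by auto
qed

end


lemma of_rat_power_int: "(of_rat (q powi n) :: 'a::field_char_0) = of_rat q powi n"
proof (cases "n \<ge> 0")
  case True then show ?thesis by (simp add: power_int_nonneg_exp of_rat_power)
next
  case False
  then have "n = - int (nat (-n))" by simp
  then show ?thesis by (metis of_rat_inverse of_rat_power power_int_minus power_int_of_nat)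
qed

lemma sum_int_shift: "(\<Sum>n\<in>{v..v + int N}. f n) = (\<Sum>k<Suc N. f (v + int k))"
proof (induction N)
  case 0 then show ?case by simp
next
  case (Suc N)
  have "{v..v + int (Suc N)} = insert (1 + (v + int N)) {v..v + int N}"
    using atLeastAtMostPlus1_int_conv[of v "v + int N"] by (simp add: add.commute add.left_commute)
  then have eq: "(\<Sum>n\<in>{v..v + int (Suc N)}. f n) = f (v + int (Suc N)) + (\<Sum>n\<in>{v..v + int N}. f n)"
    by (simp add: add.commute add.left_commute)
  have eq2: "(\<Sum>k<Suc (Suc N). f (v + int k)) = (\<Sum>k<Suc N. f (v + int k)) + f (v + int (Suc N))"
    by (rule sum.lessThan_Suc)
  show ?case by (subst eq, subst eq2, subst Suc.IH, rule add.commute)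
qed

context pf begin

abbreviation pp :: "int \<Rightarrow> 'a" where "pp n \<equiv> (of_nat p :: 'a) powi n"

lemma p_nz: "(of_nat p :: 'a) \<noteq> 0" using prime prime_gt_0_nat by simp

lemma av_pp: "absv (pp n) = P powi (- n)"
  using P_pos by (simp add: av_power_int av_p power_int_minus power_int_one_over inverse_eq_divide)

lemma Ppow_nat: "P powi (- int N) = (1 / P) ^ N"
  by (simp add: power_int_minus power_one_over inverse_eq_divide)

lemma small_eventually:
  assumes "c > 0" "e > 0" shows "\<exists>M. \<forall>N\<ge>M. c * (1/P)^N < e"
proof -
  obtain M where M: "(1/P)^M < e / c" using real_arch_pow_inv[of "e/c" "1/P"] assms P_gt1 by auto
  have "\<forall>N\<ge>M. c * (1/P)^N < e"
  proof (intro allI impI)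
    fix N assume "N \<ge> M"
    then have "(1/P)^N \<le> (1/P)^M" using P_gt1 by (intro power_decreasing) auto
    then have "(1/P)^N < e / c" using M by linarith
    then show "c * (1/P)^N < e" using assms by (simp add: field_simps)
  qed
  then show ?thesis by blast
qed

lemma expansion:
  assumes "absv y \<le> 1"
  shows "\<exists>d::nat \<Rightarrow> int. (\<forall>k. d k \<in> digit_set p) \<and>
     (\<forall>N. absv (y - (\<Sum>k<N. of_int (d k) * of_nat p ^ k)) \<le> (1/P)^N)"
proof -
  define dg where "dg z = (SOME c. c \<in> digit_set p \<and> absv (z - of_int c) \<le> 1 / P)" for z :: 'a
  have dg: "dg z \<in> digit_set p \<and> absv (z - of_int (dg z)) \<le> 1 / P" if "absv z \<le> 1" for z
  proof -
    have "\<exists>c. c \<in> digit_set p \<and> absv (z - of_int c) \<le> 1 / P" using approx_digit[OF that] by blast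
    then show ?thesis unfolding dg_def by (rule someI_ex)
  qed
  define r where "r = rec_nat y (\<lambda>k z. (z - of_int (dg z)) / (of_nat p :: 'a))"
  have r0: "r 0 = y" and rS: "r (Suc k) = (r k - of_int (dg (r k))) / of_nat p" for k
    unfolding r_def by simp_all
  have rb: "absv (r k) \<le> 1" for k
  proof (induction k)
    case 0 then show ?case using r0 assms by simp
  next
    case (Suc k)
    have "absv (r (Suc k)) = absv (r k - of_int (dg (r k))) * P"
      using rS[of k] P_pos by (simp add: av_divide av_p)
    also have "\<dots> \<le> (1/P) * P" using dg[OF Suc] P_pos by (intro mult_right_mono) auto
    finally show ?case using P_pos by simp
  qed
  have ident: "y = (\<Sum>k<N. of_int (dg (r k)) * of_nat p ^ k) + of_nat p ^ N * r N" for N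
  proof (induction N)
    case 0 then show ?case using r0 by simp
  next
    case (Suc N)
    have h: "r N = of_int (dg (r N)) + of_nat p * r (Suc N)" using rS[of N] p_nz by (simp add: field_simps)
    have "of_nat p ^ N * r N = of_nat p ^ N * (of_int (dg (r N)) + of_nat p * r (Suc N))"
      by (rule arg_cong[OF h])
    also have "\<dots> = of_int (dg (r N)) * of_nat p ^ N + of_nat p ^ Suc N * r (Suc N)"
      by (simp add: algebra_simps)
    finally have "of_nat p ^ N * r N = of_int (dg (r N)) * of_nat p ^ N + of_nat p ^ Suc N * r (Suc N)" .
    then show ?case using Suc by simp
  qed
  show ?thesis
  proof (intro exI[of _ "\<lambda>k. dg (r k)"] conjI allI)
    fix k show "dg (r k) \<in> digit_set p" using dg[OF rb] by blast
  next
    fix N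
    have "y - (\<Sum>k<N. of_int (dg (r k)) * of_nat p ^ k) = of_nat p ^ N * r N"
      using ident[of N] by (simp add: algebra_simps)
    then have "absv (y - (\<Sum>k<N. of_int (dg (r k)) * of_nat p ^ k)) = (1/P)^N * absv (r N)"
      by (simp add: av_mult av_power av_p)
    also have "\<dots> \<le> (1/P)^N" using rb[of N] P_pos by (simp add: mult_left_le)
    finally show "absv (y - (\<Sum>k<N. of_int (dg (r k)) * of_nat p ^ k)) \<le> (1/P)^N" .
  qed
qed

definition dspec :: "int \<Rightarrow> 'a \<Rightarrow> (int \<Rightarrow> int) \<Rightarrow> bool" where
  "dspec v x a \<longleftrightarrow> (\<forall>n. a n \<in> digit_set p) \<and>
      (\<forall>n < v. a n = 0) \<and>
      a v \<noteq> 0 \<and>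
      padic_tendsto absv
        (\<lambda>N. of_rat (\<Sum>n\<in>{v .. v + int N}. of_int (a n) * (of_nat p :: rat) powi n)) x"

lemma SS_eq: "(of_rat (\<Sum>n\<in>{v .. v + int N}. of_int (a n) * (of_nat p :: rat) powi n) :: 'a)
   = (\<Sum>k<Suc N. of_int (a (v + int k)) * pp (v + int k))"
  unfolding sum_int_shift of_rat_sum by (simp add: of_rat_mult of_rat_power_int del: sum.lessThan_Suc)

lemma zero_digit: "0 \<in> digit_set p" unfolding digit_set_def using prime_gt_0_nat[OF prime] by auto

lemma digits_exist:
  assumes "x \<noteq> 0" "absv x = P powi (- v)"
  shows "\<exists>a. dspec v x a"
proof -
  define y where "y = x / pp v"
  have ppnz: "pp v \<noteq> 0" using p_nz by simp
  have xy: "x = pp v * y" using ppnz unfolding y_def by simp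
  have ay: "absv y = 1" using assms(2) av_pp[of v] Ppow_pos prime_gt_0_nat[OF prime] unfolding y_def by (simp add: av_divide)
  obtain d where d: "\<forall>k. d k \<in> digit_set p"
     "\<forall>N. absv (y - (\<Sum>k<N. of_int (d k) * of_nat p ^ k)) \<le> (1/P)^N"
    using expansion[of y] ay by auto
  define a where "a n = (if v \<le> n then d (nat (n - v)) else 0)" for n
  have "dspec v x a" unfolding dspec_def padic_tendsto_def
  proof (intro conjI allI impI)
    fix n show "a n \<in> digit_set p" unfolding a_def using d(1) zero_digit by auto
  next
    fix n assume "n < v" then show "a n = 0" unfolding a_def by simp
  next
    show "a v \<noteq> 0"
    proof
      assume "a v = 0"
      then have "d 0 = 0" unfolding a_def by simp
      then have "absv y \<le> 1 / P" using d(2)[rule_format, of 1] by simp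
      then show False using ay P_gt1 by (simp add: field_simps)
    qed
  next
    fix e :: real assume "e > 0"
    obtain M where M: "\<forall>N\<ge>M. P powi (- v) * (1/P)^N < e" using small_eventually[OF Ppow_pos \<open>e > 0\<close>] by blast
    show "\<exists>N. \<forall>n\<ge>N. absv (of_rat (\<Sum>k\<in>{v..v + int n}. of_int (a k) * of_nat p powi k) - x) < e"
    proof (intro exI allI impI)
      fix n assume "n \<ge> M"
      have "(of_rat (\<Sum>k\<in>{v..v + int n}. of_int (a k) * of_nat p powi k) :: 'a)
          = (\<Sum>k<Suc n. of_int (a (v + int k)) * pp (v + int k))" by (rule SS_eq)
      also have "\<dots> = (\<Sum>k<Suc n. pp v * (of_int (d k) * of_nat p ^ k))"
        using p_nz by (intro sum.cong) (auto simp: a_def power_int_add)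
      also have "\<dots> = pp v * (\<Sum>k<Suc n. of_int (d k) * of_nat p ^ k)" by (rule sum_distrib_left[symmetric])
      finally have "absv (of_rat (\<Sum>k\<in>{v..v + int n}. of_int (a k) * of_nat p powi k) - x)
         = P powi (- v) * absv (y - (\<Sum>k<Suc n. of_int (d k) * of_nat p ^ k))"
        using xy by (simp add: av_mult av_pp flip: right_diff_distrib av_commute)
      also have "\<dots> \<le> P powi (- v) * (1/P)^(Suc n)" using d(2)[rule_format, of "Suc n"] Ppow_pos[of "-v"] by (intro mult_left_mono) (simp_all del: sum.lessThan_Suc power_Suc)
      also have "\<dots> < e" using M[rule_format, of "Suc n"] \<open>n \<ge> M\<close> by (simp del: power_Suc)
      finally show "absv (of_rat (\<Sum>k\<in>{v..v + int n}. of_int (a k) * of_nat p powi k) - x) < e" .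
    qed
  qed
  then show ?thesis by blast
qed

end

context pf begin

lemma digits_unique:
  assumes A1: "dspec v x a1" and A2: "dspec v x a2"
  shows "a1 = a2"
proof (rule ccontr)
  assume "a1 \<noteq> a2"
  then obtain n where n: "a1 n \<noteq> a2 n" by auto
  have d1: "\<forall>n. a1 n \<in> digit_set p" "\<forall>n<v. a1 n = 0" using A1 unfolding dspec_def by auto
  have d2: "\<forall>n. a2 n \<in> digit_set p" "\<forall>n<v. a2 n = 0" using A2 unfolding dspec_def by auto
  have "n \<ge> v" using n d1(2) d2(2) by (metis linorder_not_le)
  then have ex: "a1 (v + int (nat (n - v))) \<noteq> a2 (v + int (nat (n - v)))" using n by simp
  define K where "K = (LEAST k::nat. a1 (v + int k) \<noteq> a2 (v + int k))"
  have K: "a1 (v + int K) \<noteq> a2 (v + int K)" unfolding K_def using ex by (rule LeastI)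
  have below: "a1 (v + int k) = a2 (v + int k)" if "k < K" for k
    using not_less_Least[OF that[unfolded K_def]] by blast
  define m where "m = v + int K"
  define g where "g k = (of_int (a1 (v + int k) - a2 (v + int k)) :: 'a) * pp (v + int k)" for k
  have D: "(of_rat (\<Sum>n\<in>{v .. v + int N}. of_int (a1 n) * (of_nat p :: rat) powi n) :: 'a)
       - of_rat (\<Sum>n\<in>{v .. v + int N}. of_int (a2 n) * (of_nat p :: rat) powi n)
       = (\<Sum>k<Suc N. g k)" for N
    unfolding SS_eq g_def by (simp add: sum_subtractf[symmetric] algebra_simps del: sum.lessThan_Suc)
  have gK: "absv (g K) = P powi (- m)"
  proof -
    have "\<not> int p dvd (a1 m - a2 m)" using digit_diff d1(1) d2(1) K unfolding m_def by blast
    then have "absv (of_int (a1 m - a2 m) :: 'a) = 1" by (rule av_int_ndvd)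
    then show ?thesis unfolding g_def m_def by (simp add: av_mult av_pp)
  qed
  have Dabs: "absv (\<Sum>k<Suc N. g k) = P powi (- m)" if "N \<ge> K" for N
  proof -
    have "K \<in> {..<Suc N}" using that by simp
    then have split: "(\<Sum>k<Suc N. g k) = g K + (\<Sum>k\<in>{..<Suc N} - {K}. g k)"
      using sum.remove[of "{..<Suc N}" K g] by simp
    have "absv (\<Sum>k\<in>{..<Suc N} - {K}. g k) \<le> P powi (- (m + 1))"
    proof (rule av_sum_le)
      show "finite ({..<Suc N} - {K})" by simp
      show "0 \<le> P powi (- (m + 1))" using Ppow_pos less_imp_le by blast
      fix k assume k: "k \<in> {..<Suc N} - {K}"
      show "absv (g k) \<le> P powi (- (m + 1))"
      proof (cases "k < K")
        case True then show ?thesis using below[OF True] Ppow_pos less_imp_le unfolding g_def by auto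
      next
        case False
        then have "k > K" using k by auto
        have "absv (g k) = absv (of_int (a1 (v + int k) - a2 (v + int k)) :: 'a) * P powi (- (v + int k))"
          unfolding g_def by (simp add: av_mult av_pp)
        also have "\<dots> \<le> 1 * P powi (- (v + int k))"
          using av_int_le1 Ppow_pos less_imp_le by (intro mult_right_mono) blast+
        also have "\<dots> \<le> P powi (- (m + 1))" using \<open>k > K\<close> unfolding m_def by (simp add: Ppow_le_iff)
        finally show ?thesis .
      qed
    qed
    also have "\<dots> < absv (g K)" using gK Ppow_less_iff by simp
    finally show ?thesis using split av_add_eq gK by simp
  qed
  obtain N1 where N1: "\<forall>n\<ge>N1. absv (of_rat (\<Sum>n\<in>{v .. v + int n}. of_int (a1 n) * (of_nat p :: rat) powi n) - x) < P powi (- m)"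
    using A1 Ppow_pos unfolding dspec_def padic_tendsto_def by blast
  obtain N2 where N2: "\<forall>n\<ge>N2. absv (of_rat (\<Sum>n\<in>{v .. v + int n}. of_int (a2 n) * (of_nat p :: rat) powi n) - x) < P powi (- m)"
    using A2 Ppow_pos unfolding dspec_def padic_tendsto_def by blast
  define N where "N = max (max N1 N2) K"
  let ?S1 = "(of_rat (\<Sum>n\<in>{v .. v + int N}. of_int (a1 n) * (of_nat p :: rat) powi n) :: 'a)"
  let ?S2 = "(of_rat (\<Sum>n\<in>{v .. v + int N}. of_int (a2 n) * (of_nat p :: rat) powi n) :: 'a)"
  have "absv (?S1 - x) < P powi (- m)" using N1 unfolding N_def by simp
  moreover have "absv (x - ?S2) < P powi (- m)" using N2 av_commute unfolding N_def by (metis max.cobounded1 max.coboundedI1 max.commute)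
  ultimately have "absv ((?S1 - x) + (x - ?S2)) < P powi (- m)"
    using av_ultra[of "?S1 - x" "x - ?S2"] by simp
  moreover have "absv ((?S1 - x) + (x - ?S2)) = P powi (- m)" using D[of N] Dabs[of N] unfolding N_def by simp
  ultimately show False by simp
qed

lemma digits_spec:
  assumes "x \<noteq> 0"
  shows "dspec (padic_val p absv x) x (padic_digits p absv x)"
proof -
  let ?v = "padic_val p absv x"
  have "\<exists>!a. dspec ?v x a"
    using digits_exist[OF assms val_eq[OF assms]] digits_unique by blast
  then show ?thesis unfolding padic_digits_def dspec_def[symmetric] by (rule theI')
qed

end

context pf begin

lemma partial_bound:
  assumes "x \<noteq> 0"
  shows "absv (x - of_rat (\<Sum>n\<in>{padic_val p absv x .. u}. of_int (padic_digits p absv x n) * (of_nat p :: rat) powi n))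
         \<le> P powi (- (u + 1))"
proof -
  define v where "v = padic_val p absv x"
  define a where "a = padic_digits p absv x"
  define f where "f n = of_int (a n) * (of_nat p :: rat) powi n" for n
  have sp: "dspec v x a" using digits_spec[OF assms] unfolding v_def a_def .
  obtain N1 where N1: "\<forall>n\<ge>N1. absv (of_rat (\<Sum>n\<in>{v .. v + int n}. f n) - x) < P powi (- (u + 1))"
    using sp Ppow_pos unfolding dspec_def padic_tendsto_def f_def by blast
  define N where "N = max N1 (nat (u - v))"
  have c1: "absv (x - of_rat (\<Sum>n\<in>{v .. v + int N}. f n)) \<le> P powi (- (u + 1))"
    using N1[rule_format, of N] av_commute unfolding N_def by (metis less_imp_le max.cobounded1)
  have sub: "{v..u} \<subseteq> {v .. v + int N}" unfolding N_def by auto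
  have "(\<Sum>n\<in>{v .. v + int N}. f n) - (\<Sum>n\<in>{v..u}. f n) = (\<Sum>n\<in>{v .. v + int N} - {v..u}. f n)"
    using sum_diff[OF _ sub, of f] by simp
  then have eq: "(of_rat (\<Sum>n\<in>{v .. v + int N}. f n) :: 'a) - of_rat (\<Sum>n\<in>{v..u}. f n)
      = (\<Sum>n\<in>{v .. v + int N} - {v..u}. of_rat (f n))"
    by (metis of_rat_diff of_rat_sum)
  have c2: "absv ((of_rat (\<Sum>n\<in>{v .. v + int N}. f n) :: 'a) - of_rat (\<Sum>n\<in>{v..u}. f n)) \<le> P powi (- (u + 1))"
    unfolding eq
  proof (rule av_sum_le)
    show "finite ({v..v + int N} - {v..u})" by simp
    show "0 \<le> P powi (- (u + 1))" using Ppow_pos less_imp_le by blast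
    fix n assume n: "n \<in> {v..v + int N} - {v..u}"
    then have "n \<ge> u + 1" by auto
    have "absv (of_rat (f n) :: 'a) = absv (of_int (a n) :: 'a) * P powi (- n)"
      unfolding f_def by (simp add: of_rat_mult of_rat_power_int av_mult av_pp)
    also have "\<dots> \<le> 1 * P powi (- n)"
      using av_int_le1 Ppow_pos less_imp_le by (intro mult_right_mono) blast+
    also have "\<dots> \<le> P powi (- (u + 1))" using \<open>n \<ge> u + 1\<close> by (simp add: Ppow_le_iff)
    finally show "absv (of_rat (f n) :: 'a) \<le> P powi (- (u + 1))" .
  qed
  have "absv ((x - of_rat (\<Sum>n\<in>{v .. v + int N}. f n)) + ((of_rat (\<Sum>n\<in>{v .. v + int N}. f n) :: 'a) - of_rat (\<Sum>n\<in>{v..u}. f n)))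
       \<le> P powi (- (u + 1))"
    using av_ultra c1 c2 by (meson max.bounded_iff order_trans)
  then show ?thesis unfolding v_def[symmetric] a_def[symmetric] f_def[symmetric] by simp
qed

lemma s_bound: "absv (x - of_rat (padic_s p absv x)) \<le> 1 / P"
proof (cases "x = 0")
  case True then show ?thesis using P_pos by (simp add: padic_s_def)
next
  case False
  show ?thesis using partial_bound[OF False, of 0] False unfolding padic_s_def
    by (simp add: power_int_minus inverse_eq_divide)
qed

lemma t_bound: "absv (x - of_rat (padic_t p absv x)) \<le> 1"
proof (cases "x = 0")
  case True then show ?thesis by (simp add: padic_t_def)
next
  case False
  show ?thesis using partial_bound[OF False, of "-1"] False unfolding padic_t_def by simp
qed

lemma sbar_bound: "absv (x - of_rat (sbar p absv x)) \<le> 1 / P"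
proof -
  define k where "k = round ((trace_Q x / of_nat (deg_Q x) - padic_s p absv x) / of_nat p)"
  have e: "x - of_rat (sbar p absv x) = (x - of_rat (padic_s p absv x)) + (- (of_int k * of_nat p))"
    unfolding sbar_def k_def by (simp add: of_rat_add of_rat_mult)
  have "absv (- (of_int k * of_nat p) :: 'a) \<le> 1 / P"
    using av_int_le1[of k] P_pos by (simp add: av_mult av_p divide_right_mono)
  then show ?thesis unfolding e using av_ultra s_bound by (meson max.bounded_iff order_trans)
qed

lemma tbar_bound: "absv (x - of_rat (tbar p absv x)) \<le> 1"
proof -
  define k where "k = round (trace_Q x / of_nat (deg_Q x) - padic_t p absv x)"
  have e: "x - of_rat (tbar p absv x) = (x - of_rat (padic_t p absv x)) + (- of_int k)"
    unfolding tbar_def k_def by (simp add: of_rat_add)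
  have "absv (- of_int k :: 'a) \<le> 1" using av_int_le1[of k] by simp
  then show ?thesis unfolding e using av_ultra t_bound by (meson max.bounded_iff order_trans)
qed

end

lemma div_ge1: assumes "(x::real) \<ge> 0" "y \<ge> 1" shows "x / y \<le> x"
proof -
  have "x \<le> x * y" using mult_left_mono[of 1 y x] assms by simp
  then show ?thesis using assms by (simp add: divide_le_eq)
qed

context pf begin

lemma cf_converges:
  fixes b :: "nat \<Rightarrow> rat"
  assumes ge1: "\<And>n. n \<ge> 1 \<Longrightarrow> absv (of_rat (b n) :: 'a) \<ge> 1"
  and alt: "\<And>n. n \<ge> 1 \<Longrightarrow> absv (of_rat (b n) :: 'a) \<ge> P \<or> absv (of_rat (b (Suc n)) :: 'a) \<ge> P"
  shows "\<exists>L::'a. padic_tendsto absv (\<lambda>n. of_rat (cf_convergent b n)) L"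
proof -
  define T where "T k n = cf_eval (map b [k..<Suc n])" for k n
  define B where "B k = absv (of_rat (b k) :: 'a)" for k
  have Tnn: "T n n = b n" for n unfolding T_def by simp
  have Tcons: "T k n = b k + 1 / T (Suc k) n" if "k < n" for k n
  proof -
    have "[k..<Suc n] = k # Suc k # [Suc (Suc k)..<Suc n]" using that by (simp add: upt_conv_Cons)
    moreover have "[Suc k..<Suc n] = Suc k # [Suc (Suc k)..<Suc n]" using that by (simp add: upt_conv_Cons)
    ultimately show ?thesis unfolding T_def by simp
  qed
  have Tabs: "absv (of_rat (T k n) :: 'a) = B k" if "1 \<le> k" "k \<le> n" for k n
    using that
  proof (induction "n - k" arbitrary: k)
    case 0 then have "k = n" by simp
    then show ?case using Tnn B_def by simp
  next
    case (Suc d)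
    then have kn: "k < n" by simp
    have IH: "absv (of_rat (T (Suc k) n) :: 'a) = B (Suc k)" using Suc by simp
    have B1: "B (Suc k) \<ge> 1" using ge1 B_def by simp
    have Bk: "B k \<ge> 1" using ge1 B_def Suc.prems by simp
    have "absv (of_rat (1 / T (Suc k) n) :: 'a) = 1 / B (Suc k)" using IH by (simp add: of_rat_divide av_divide)
    also have "\<dots> < B k"
    proof (cases "B (Suc k) \<ge> P")
      case True
      then have "1 / B (Suc k) \<le> 1 / P" using P_pos by (intro divide_left_mono) auto
      then show ?thesis using P_gt1 Bk by (smt (verit) divide_less_eq_1_pos P_pos)
    next
      case False
      then have "B k \<ge> P" using alt[OF Suc.prems(1)] B_def by auto
      moreover have "1 / B (Suc k) \<le> 1" using B1 by simp
      ultimately show ?thesis using P_gt1 by linarith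
    qed
    finally have "absv (of_rat (b k) + of_rat (1 / T (Suc k) n) :: 'a) = B k" using av_add_eq B_def by simp
    then show ?case using Tcons[OF kn] by (simp add: of_rat_add)
  qed
  define G where "G k n = absv (of_rat (T k (Suc n) - T k n) :: 'a)" for k n
  have Gnn: "G n n \<le> 1" for n
  proof -
    have "T n (Suc n) = b n + 1 / b (Suc n)" using Tcons[of n "Suc n"] Tnn by simp
    then have "G n n = 1 / B (Suc n)" unfolding G_def B_def using Tnn by (simp add: of_rat_divide av_divide)
    then show ?thesis using ge1[of "Suc n"] B_def by simp
  qed
  have Gstep: "G k n = G (Suc k) n / (B (Suc k) * B (Suc k))" if "k < n" for k n
  proof -
    have X: "absv (of_rat (T (Suc k) (Suc n)) :: 'a) = B (Suc k)" using Tabs that by simp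
    have Y: "absv (of_rat (T (Suc k) n) :: 'a) = B (Suc k)" using Tabs that by simp
    have B1: "B (Suc k) \<ge> 1" using ge1 B_def by simp
    have Xn: "T (Suc k) (Suc n) \<noteq> 0" using X B1 by auto
    have Yn: "T (Suc k) n \<noteq> 0" using Y B1 by auto
    have "T k (Suc n) - T k n = 1 / T (Suc k) (Suc n) - 1 / T (Suc k) n"
      using Tcons[of k "Suc n"] Tcons[of k n] that by simp
    also have "\<dots> = (T (Suc k) n - T (Suc k) (Suc n)) / (T (Suc k) (Suc n) * T (Suc k) n)"
      using Xn Yn by (simp add: field_simps)
    finally have "G k n = absv (of_rat (T (Suc k) n - T (Suc k) (Suc n)) :: 'a) / (B (Suc k) * B (Suc k))"
      unfolding G_def using X Y by (simp add: of_rat_divide of_rat_mult av_divide av_mult)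
    then show ?thesis unfolding G_def by (simp add: av_commute of_rat_diff)
  qed
  have Gnn0: "G k n \<ge> 0" for k n unfolding G_def using av_nonneg by simp
  have Gmono: "G k n \<le> G (Suc k) n / B (Suc k)" if "k < n" for k n
  proof -
    have B1: "B (Suc k) \<ge> 1" using ge1 B_def by simp
    have "G k n = (G (Suc k) n / B (Suc k)) / B (Suc k)" using Gstep[OF that] by simp
    also have "\<dots> \<le> G (Suc k) n / B (Suc k)" using B1 Gnn0[of "Suc k" n]
      by (intro div_ge1) auto
    finally show ?thesis .
  qed
  have Gbound: "G k n \<le> (1/P) ^ (d div 2)" if "k + d = n" for d k n
    using that
  proof (induction d arbitrary: k rule: less_induct)
    case (less d)
    show ?case
    proof (cases "d \<le> 1")
      case True
      then consider "d = 0" | "d = 1" by linarith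
      then show ?thesis
      proof cases
        case 1 then show ?thesis using less.prems Gnn by simp
      next
        case 2
        have "k < n" using less.prems 2 by simp
        then have "G k n \<le> G (Suc k) n / B (Suc k)" by (rule Gmono)
        also have "\<dots> \<le> G (Suc k) n" using ge1[of "Suc k"] B_def Gnn0[of "Suc k" n]
          by (intro div_ge1) auto
        also have "\<dots> \<le> 1" using Gnn less.prems 2 by (metis add.commute plus_1_eq_Suc)
        finally show ?thesis using 2 by simp
      qed
    next
      case False
      then obtain d' where d': "d = Suc (Suc d')" by (metis Suc_diff_Suc Suc_pred less_one not_less numeral_nat(7) zero_less_diff One_nat_def Suc_1 diff_Suc_1 le_add_diff_inverse nat_le_linear)
      have IH: "G (Suc (Suc k)) n \<le> (1/P) ^ (d' div 2)" using less.IH[of d' "Suc (Suc k)"] less.prems d' by simp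
      have B1: "B (Suc k) \<ge> 1" "B (Suc (Suc k)) \<ge> 1" using ge1 B_def by simp_all
      have BP: "B (Suc k) * B (Suc (Suc k)) \<ge> P"
      proof -
        have "B (Suc k) \<ge> P \<or> B (Suc (Suc k)) \<ge> P" using alt[of "Suc k"] B_def by simp
        then show ?thesis using B1 P_pos
          by (metis mult.commute mult_le_cancel_left1 order_trans less_imp_le mult_right_mono zero_le_one)
      qed
      have "G k n \<le> G (Suc k) n / B (Suc k)" using Gmono less.prems d' by simp
      also have "\<dots> \<le> (G (Suc (Suc k)) n / B (Suc (Suc k))) / B (Suc k)"
        using Gmono[of "Suc k" n] less.prems d' B1 by (intro divide_right_mono) auto
      also have "\<dots> = G (Suc (Suc k)) n / (B (Suc k) * B (Suc (Suc k)))" by (simp add: field_simps)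
      also have "\<dots> \<le> G (Suc (Suc k)) n / P"
        using BP Gnn0 P_pos by (intro divide_left_mono) auto
      also have "\<dots> \<le> (1/P) ^ (d' div 2) / P" using IH P_pos by (intro divide_right_mono) auto
      also have "\<dots> = (1/P) ^ (d div 2)" using d' by (simp add: field_simps)
      finally show ?thesis .
    qed
  qed
  define c where "c n = (of_rat (cf_convergent b n) :: 'a)" for n
  have cT: "c n = of_rat (T 0 n)" for n unfolding c_def T_def cf_convergent_def by simp
  have cstep: "absv (c (Suc n) - c n) \<le> (1/P) ^ (n div 2)" for n
    using Gbound[of 0 n n] unfolding G_def cT by (simp add: of_rat_diff)
  have cdist: "absv (c m - c n) \<le> (1/P) ^ (n div 2)" if "n \<le> m" for m n
    using that
  proof (induction m)
    case 0 then show ?case by simp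
  next
    case (Suc m)
    show ?case
    proof (cases "n = Suc m")
      case True then show ?thesis by simp
    next
      case False
      then have "n \<le> m" using Suc.prems by simp
      then have h1: "absv (c m - c n) \<le> (1/P) ^ (n div 2)" using Suc.IH by simp
      have "(1/P) ^ (m div 2) \<le> (1/P) ^ (n div 2)" using \<open>n \<le> m\<close> P_gt1
        by (intro power_decreasing) (auto simp: div_le_mono)
      then have h2: "absv (c (Suc m) - c m) \<le> (1/P) ^ (n div 2)" using cstep[of m] by linarith
      have "c (Suc m) - c n = (c (Suc m) - c m) + (c m - c n)" by simp
      then show ?thesis using av_ultra[of "c (Suc m) - c m" "c m - c n"] h1 h2 by simp
    qed
  qed
  have "\<forall>e>0. \<exists>N. \<forall>m\<ge>N. \<forall>n\<ge>N. absv (c m - c n) < e"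
  proof (intro allI impI)
    fix e :: real assume "e > 0"
    obtain M where M: "\<forall>N\<ge>M. 1 * (1/P)^N < e" using small_eventually[of 1 e] \<open>e > 0\<close> by auto
    have "\<forall>m\<ge>2*M. \<forall>n\<ge>2*M. absv (c m - c n) < e"
    proof (intro allI impI)
      fix m n assume "m \<ge> 2*M" "n \<ge> 2*M"
      have "absv (c m - c n) \<le> (1/P) ^ (min m n div 2)"
        using cdist[of n m] cdist[of m n] av_commute by (cases "n \<le> m") (auto simp: min_def)
      also have "\<dots> < e" using M \<open>m \<ge> 2*M\<close> \<open>n \<ge> 2*M\<close> by auto
      finally show "absv (c m - c n) < e" .
    qed
    then show "\<exists>N. \<forall>m\<ge>N. \<forall>n\<ge>N. absv (c m - c n) < e" by blast
  qed
  then obtain L where "\<forall>e>0. \<exists>N. \<forall>n\<ge>N. absv (c n - L) < e" using av_complete by blast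
  then show ?thesis unfolding padic_tendsto_def c_def by blast
qed

end

context pf begin

lemma next_ge:
  assumes "y = inverse (x - of_rat b)" "x \<noteq> of_rat b" "absv (x - of_rat b) \<le> c" "c > 0"
  shows "absv y \<ge> 1 / c"
proof -
  have pos: "absv (x - of_rat b) > 0" using assms(2) av_pos by simp
  have "absv y = inverse (absv (x - of_rat b))" using assms(1) av_inverse by metis
  then have "absv y = 1 / absv (x - of_rat b)" by (simp add: inverse_eq_divide)
  then show ?thesis using pos assms(3,4) by (simp add: frac_le)
qed

lemma b_eq:
  assumes "absv (x - of_rat b) < absv x" shows "absv (of_rat b) = absv x"
proof -
  have "of_rat b = x + (- (x - of_rat b))" by simp
  moreover have "absv (- (x - of_rat b)) < absv x" using assms av_commute[of "of_rat b" x] by simp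
  ultimately show ?thesis using av_add_eq[of "- (x - of_rat b)" x] by metis
qed

lemma val_cases:
  assumes "absv x \<ge> 1"
  shows "(absv x = 1 \<longrightarrow> padic_val p absv x = 0) \<and> (absv x > 1 \<longrightarrow> padic_val p absv x < 0)"
proof -
  have "x \<noteq> 0" using assms by auto
  then have e: "absv x = P powi (- padic_val p absv x)" by (rule val_eq)
  show ?thesis
  proof (intro conjI impI)
    assume "absv x = 1"
    then have "P powi (- padic_val p absv x) \<le> P powi 0" "P powi 0 \<le> P powi (- padic_val p absv x)"
      using e by simp_all
    then show "padic_val p absv x = 0" using Ppow_le_iff by (metis antisym neg_0_le_iff_le neg_le_0_iff_le)
  next
    assume "absv x > 1"
    then have "P powi 0 < P powi (- padic_val p absv x)" using e by simp
    then show "padic_val p absv x < 0" using Ppow_less_iff by (metis neg_0_less_iff_less)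
  qed
qed

lemma algA:
  assumes ns: "\<not> cf_stops (ruleA p absv) a"
  shows "\<exists>L. padic_tendsto absv (\<lambda>n. of_rat (cf_convergent (cf_b (ruleA p absv) a) n)) L"
proof -
  define al where "al n = cf_alpha (ruleA p absv) a n" for n
  define bb where "bb n = cf_b (ruleA p absv) a n" for n
  have bbeq: "bb n = ruleA p absv n (al n)" for n by (simp add: bb_def al_def cf_b_def)
  have rec: "al (Suc n) = inverse (al n - of_rat (bb n))" for n by (simp add: al_def bb_def cf_b_def)
  have ne: "al n \<noteq> of_rat (bb n)" for n using ns unfolding cf_stops_def al_def bb_def by blast
  have P1: "1 / (1 / P) = P" by simp
  have invP: "1 / P > 0" using P_pos by simp
  have rs: "bb n = sbar p absv (al n)" if "n \<ge> 1" "absv (al n) = 1" for n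
    using val_cases[of "al n"] that unfolding bbeq ruleA_def by simp
  have rt: "bb n = tbar p absv (al n)" if "n \<ge> 1" "absv (al n) > 1" for n
    using val_cases[of "al n"] that unfolding bbeq ruleA_def by simp
  have geS: "absv (al (Suc n)) \<ge> P" if "bb n = sbar p absv (al n)" for n
    using next_ge[OF rec ne _ invP, of n] sbar_bound[of "al n"] that by simp
  have geT: "absv (al (Suc n)) \<ge> 1" if "bb n = tbar p absv (al n)" for n
    using next_ge[OF rec ne, of n 1] tbar_bound[of "al n"] that by simp
  have ge1: "absv (al n) \<ge> 1" if "n \<ge> 1" for n
    using that
  proof (induction n)
    case 0 then show ?case by simp
  next
    case (Suc n)
    show ?case
    proof (cases "n = 0")
      case True
      then have "bb n = sbar p absv (al n)" unfolding bbeq ruleA_def by simp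
      then have "absv (al (Suc n)) \<ge> P" by (rule geS)
      then show ?thesis using P_gt1 by linarith
    next
      case False
      then have h: "absv (al n) \<ge> 1" using Suc by simp
      show ?thesis
      proof (cases "absv (al n) = 1")
        case True
        have "n \<ge> 1" using \<open>n \<noteq> 0\<close> by simp
        have "absv (al (Suc n)) \<ge> P" using geS[OF rs[OF \<open>n \<ge> 1\<close> True]] .
        then show ?thesis using P_gt1 by linarith
      next
        case False
        then have "absv (al n) > 1" using h by simp
        then show ?thesis using geT[OF rt] \<open>n \<noteq> 0\<close> by simp
      qed
    qed
  qed
  have Beq: "absv (of_rat (bb n) :: 'a) = absv (al n)" if "n \<ge> 1" for n
  proof (rule b_eq)
    show "absv (al n - of_rat (bb n)) < absv (al n)"
    proof (cases "absv (al n) = 1")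
      case True
      have "1 / P < 1" using P_gt1 by simp
      moreover have "absv (al n - of_rat (bb n)) \<le> 1 / P" using sbar_bound[of "al n"] rs[OF that True] by simp
      ultimately show ?thesis using True by linarith
    next
      case False
      then have "absv (al n) > 1" using ge1[OF that] by simp
      moreover have "absv (al n - of_rat (bb n)) \<le> 1" using tbar_bound[of "al n"] rt[OF that \<open>absv (al n) > 1\<close>] by simp
      ultimately show ?thesis by linarith
    qed
  qed
  show ?thesis unfolding bb_def[symmetric]
  proof (rule cf_converges)
    fix n :: nat assume "n \<ge> 1"
    then show "absv (of_rat (bb n) :: 'a) \<ge> 1" using Beq ge1 by simp
  next
    fix n :: nat assume n1: "n \<ge> 1"
    show "absv (of_rat (bb n) :: 'a) \<ge> P \<or> absv (of_rat (bb (Suc n)) :: 'a) \<ge> P"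
    proof (cases "absv (al n) \<ge> P")
      case True then show ?thesis using Beq[OF n1] by simp
    next
      case False
      then have "\<not> absv (al n) > 1" using disc_gt1 by (meson linorder_not_le)
      then have "absv (al n) = 1" using ge1[OF n1] by simp
      then have "absv (al (Suc n)) \<ge> P" using geS[OF rs[OF n1]] by simp
      then show ?thesis using Beq[of "Suc n"] by simp
    qed
  qed
qed

lemma algB:
  assumes ns: "\<not> cf_stops (ruleB p absv) a"
  shows "\<exists>L. padic_tendsto absv (\<lambda>n. of_rat (cf_convergent (cf_b (ruleB p absv) a) n)) L"
proof -
  define al where "al n = cf_alpha (ruleB p absv) a n" for n
  define bb where "bb n = cf_b (ruleB p absv) a n" for n
  have bbeq: "bb n = ruleB p absv n (al n)" for n by (simp add: bb_def al_def cf_b_def)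
  have rec: "al (Suc n) = inverse (al n - of_rat (bb n))" for n by (simp add: al_def bb_def cf_b_def)
  have ne: "al n \<noteq> of_rat (bb n)" for n using ns unfolding cf_stops_def al_def bb_def by blast
  have invP: "1 / P > 0" using P_pos by simp
  have rs: "bb n = sbar p absv (al n)" if "even n" for n
    using that unfolding bbeq ruleB_def by simp
  have rt: "bb n = tbar p absv (al n)" if "odd n" for n
    using that unfolding bbeq ruleB_def by simp
  have geS: "absv (al (Suc n)) \<ge> P" if "bb n = sbar p absv (al n)" for n
    using next_ge[OF rec ne _ invP, of n] sbar_bound[of "al n"] that by simp
  have geT: "absv (al (Suc n)) \<ge> 1" if "bb n = tbar p absv (al n)" for n
    using next_ge[OF rec ne, of n 1] tbar_bound[of "al n"] that by simp
  have ge1: "absv (al n) \<ge> 1 \<and> (odd n \<longrightarrow> absv (al n) \<ge> P)" if "n \<ge> 1" for n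
    using that
  proof (induction n)
    case 0 then show ?case by simp
  next
    case (Suc n)
    show ?case
    proof (cases "even n")
      case True
      then have "absv (al (Suc n)) \<ge> P" using geS[OF rs] by simp
      then show ?thesis using P_gt1 by simp
    next
      case False
      then have "absv (al (Suc n)) \<ge> 1" using geT[OF rt] by simp
      then show ?thesis using False by simp
    qed
  qed
  have Beq: "absv (of_rat (bb n) :: 'a) = absv (al n)" if "n \<ge> 1" for n
  proof (rule b_eq)
    show "absv (al n - of_rat (bb n)) < absv (al n)"
    proof (cases "even n")
      case True
      have "1 / P < 1" using P_gt1 by simp
      moreover have "absv (al n - of_rat (bb n)) \<le> 1 / P" using sbar_bound[of "al n"] rs[OF True] by simp
      ultimately show ?thesis using ge1[OF that] by linarith
    next
      case False
      then show ?thesis using tbar_bound[of "al n"] rt[OF False] ge1[OF that] P_gt1 by simp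
    qed
  qed
  show ?thesis unfolding bb_def[symmetric]
  proof (rule cf_converges)
    fix n :: nat assume "n \<ge> 1"
    then show "absv (of_rat (bb n) :: 'a) \<ge> 1" using Beq ge1 by simp
  next
    fix n :: nat assume n1: "n \<ge> 1"
    show "absv (of_rat (bb n) :: 'a) \<ge> P \<or> absv (of_rat (bb (Suc n)) :: 'a) \<ge> P"
    proof (cases "odd n")
      case True then show ?thesis using Beq[OF n1] ge1[OF n1] by simp
    next
      case False then show ?thesis using Beq[of "Suc n"] ge1[of "Suc n"] by simp
    qed
  qed
qed

end

theorem proposition3:
  fixes p :: nat and absv :: "'a::field_char_0 \<Rightarrow> real" and \<alpha> :: 'a
  assumes "prime p" and "padic_field p absv" and "algebraic_over_Q \<alpha>"
  shows "(\<not> cf_stops (ruleA p absv) \<alpha> \<longrightarrow>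
            (\<exists>L. padic_tendsto absv (\<lambda>n. of_rat (cf_convergent (cf_b (ruleA p absv) \<alpha>) n)) L))
       \<and> (\<not> cf_stops (ruleB p absv) \<alpha> \<longrightarrow>
            (\<exists>L. padic_tendsto absv (\<lambda>n. of_rat (cf_convergent (cf_b (ruleB p absv) \<alpha>) n)) L))"
proof -
  interpret pf p absv using assms(1,2) by unfold_locales
  show ?thesis using algA algB by blast
qed


end
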